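(* Let $\mathcal{X}\subset\mathbb{R}^2$ and let $\mathbf{f}=(f_1,\ldots,f_p)^\top:\mathcal{X}\to\mathbb{R}^p$ have linearly independent component functions (regression model $\mu(\mathbf{x})=\mathbf{f}^\top(\mathbf{x})\boldsymbol\theta$). Let $t:\mathcal{X}\to\mathbb{R}$ be a function with range $\mathcal{T}$, and for $t\in\mathcal{T}$ let $\widetilde{\mathcal{X}}(t)=\{\mathbf{x}\in\mathcal{X}:t(\mathbf{x})=t\}$ and let $\widetilde{\mathbf{f}}_t=(\widetilde f_{1t},\ldots,\widetilde f_{p_t,t})^\top:\widetilde{\mathcal{X}}(t)\to\mathbb{R}^{p_t}$ be a vector of functions that are linearly independent on $\widetilde{\mathcal{X}}(t)$ and span the same linear space as the restrictions of $f_1,\ldots,f_p$ to $\widetilde{\mathcal{X}}(t)$ (the conditional model given $t$). If a design $\xi$ on $\mathcal{X}$ is admissible in the class of all designs on $\mathcal{X}$ for the model with regression vector $\mathbf{f}$, then for every $t\in\mathcal{T}$ with $\xi_t(t)>0$ the conditional design $\xi_{\mathbf{x}|t}$ is admissible in the class $\Xi_t$ of all designs on $\widetilde{\mathcal{X}}(t)$ for the conditional model with regression vector $\widetilde{\mathbf{f}}_t$.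
   Context: A design on a set $S$ is a probability measure on $S$ with finite support. For the model with regression vector $\mathbf{f}$ on $\mathcal{X}$, the information matrix of $\xi$ is $\mathbf{M}(\xi)=\int\mathbf{f}\mathbf{f}^\top d\xi$; $\xi_1$ is admissible if there is no design $\xi_2$ on $\mathcal{X}$ with $\mathbf{M}(\xi_2)\neq\mathbf{M}(\xi_1)$ and $\mathbf{M}(\xi_2)-\mathbf{M}(\xi_1)$ nonnegative definite. Analogously, for the conditional model the information matrix of a design $\eta$ on $\widetilde{\mathcal{X}}(t)$ is $\mathbf{M}_t(\eta)=\int_{\widetilde{\mathcal{X}}(t)}\widetilde{\mathbf{f}}_t\widetilde{\mathbf{f}}_t^\top d\eta$, and admissibility in $\Xi_t$ is defined in the same way with $\mathbf{M}_t$ in place of $\mathbf{M}$. For a design $\xi$ on $\mathcal{X}$, $\xi_t(t)=\xi(\widetilde{\mathcal{X}}(t))$, and if $\xi_t(t)>0$ the conditional design is the probability measure $\xi_{\mathbf{x}|t}(A)=\xi(A\cap\widetilde{\mathcal{X}}(t))/\xi_t(t)$ on $\widetilde{\mathcal{X}}(t)$. *)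

theory Defs
  imports "HOL-Analysis.Analysis" "HOL-Probability.Probability"
begin

definition design :: "'a set \<Rightarrow> 'a pmf \<Rightarrow> bool" where
  "design S \<xi> \<longleftrightarrow> finite (set_pmf \<xi>) \<and> set_pmf \<xi> \<subseteq> S"

text \<open>Information matrix  M(xi) = integral of f f^T d xi  (finite support, so a finite sum).\<close>
definition info_matrix :: "('a \<Rightarrow> real^'p) \<Rightarrow> 'a pmf \<Rightarrow> real^'p^'p" where
  "info_matrix f \<xi> = (\<Sum>x\<in>set_pmf \<xi>. pmf \<xi> x *\<^sub>R (\<chi> i j. f x $ i * f x $ j))"

definition nonneg_def :: "real^'p^'p \<Rightarrow> bool" where
  "nonneg_def A \<longleftrightarrow> transpose A = A \<and> (\<forall>v. 0 \<le> v \<bullet> (A *v v))"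

definition admissible :: "'a set \<Rightarrow> ('a \<Rightarrow> real^'p) \<Rightarrow> 'a pmf \<Rightarrow> bool" where
  "admissible S f \<xi> \<longleftrightarrow> design S \<xi> \<and>
     \<not> (\<exists>\<xi>2. design S \<xi>2 \<and> info_matrix f \<xi>2 \<noteq> info_matrix f \<xi> \<and>
              nonneg_def (info_matrix f \<xi>2 - info_matrix f \<xi>))"

definition lin_indep_on :: "'a set \<Rightarrow> ('a \<Rightarrow> real^'p) \<Rightarrow> bool" where
  "lin_indep_on S f \<longleftrightarrow> (\<forall>c. (\<forall>x\<in>S. c \<bullet> f x = 0) \<longrightarrow> c = 0)"

definition same_span_on :: "'a set \<Rightarrow> ('a \<Rightarrow> real^'p) \<Rightarrow> ('a \<Rightarrow> real^'q) \<Rightarrow> bool" where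
  "same_span_on S f g \<longleftrightarrow>
     (\<forall>i. \<exists>c. \<forall>x\<in>S. g x $ i = c \<bullet> f x) \<and> (\<forall>i. \<exists>d. \<forall>x\<in>S. f x $ i = d \<bullet> g x)"

end

theory Submission
  imports Defs
begin

definition outer :: "real^'n \<Rightarrow> real^'n^'n" where
  "outer v = (\<chi> i j. v $ i * v $ j)"

lemma info_sum:
  assumes "finite F" "set_pmf \<xi> \<subseteq> F"
  shows "info_matrix f \<xi> = (\<Sum>x\<in>F. pmf \<xi> x *\<^sub>R outer (f x))"
  unfolding info_matrix_def outer_def
  by (rule sum.mono_neutral_left) (use assms in \<open>auto simp: set_pmf_eq\<close>)

lemma outer_mult:
  fixes A :: "real^'q^'p"
  shows "outer (A *v w) = A ** outer w ** transpose A"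
  unfolding outer_def
  by (simp add: vec_eq_iff matrix_matrix_mult_def matrix_vector_mult_def transpose_def
      sum_product sum_distrib_left sum_distrib_right mult_ac)

lemma matrix_add_rdistrib':
  fixes B :: "real^'m^'n"
  shows "(B + C) ** A = B ** A + C ** A"
  by (simp add: matrix_matrix_mult_def vec_eq_iff sum.distrib distrib_right)

lemma scalar_matrix_assoc':
  fixes A :: "real^'m^'n"
  shows "(k *\<^sub>R A) ** B = k *\<^sub>R (A ** B)"
  by (simp add: scalar_matrix_assoc)

lemma sum_matrix_mult:
  fixes A :: "real^'q^'p" and B :: "real^'p^'q"
  assumes "finite F"
  shows "(\<Sum>x\<in>F. c x *\<^sub>R (A ** M x ** B)) = A ** (\<Sum>x\<in>F. c x *\<^sub>R M x) ** B"
  using assms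
proof (induction F rule: finite_induct)
  case empty
  then show ?case by (simp add: times0_right)
next
  case (insert a F)
  then show ?case
    by (simp add: matrix_add_ldistrib matrix_add_rdistrib' matrix_scalar_ac scalar_matrix_assoc')
qed

lemma nonneg_congr:
  fixes A :: "real^'q^'p" and D :: "real^'q^'q"
  assumes "nonneg_def D" "p \<ge> 0"
  shows "nonneg_def (p *\<^sub>R (A ** D ** transpose A))"
  unfolding nonneg_def_def
proof (intro conjI allI)
  have tD: "transpose D = D" using assms(1) unfolding nonneg_def_def by blast
  show "transpose (p *\<^sub>R (A ** D ** transpose A)) = p *\<^sub>R (A ** D ** transpose A)"
    by (simp add: transpose_scalar matrix_transpose_mul tD matrix_mul_assoc)
  fix v :: "real^'p"
  have e: "(A ** D ** transpose A) *v v = A *v (D *v (transpose A *v v))"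
    by (simp only: matrix_vector_mul_assoc matrix_mul_assoc)
  have "v \<bullet> ((p *\<^sub>R (A ** D ** transpose A)) *v v)
      = p * (v \<bullet> (A *v (D *v (transpose A *v v))))"
    by (simp only: scaleR_matrix_vector_assoc[symmetric] e inner_scaleR_right)
  also have "v \<bullet> (A *v (D *v (transpose A *v v))) = (transpose A *v v) \<bullet> (D *v (transpose A *v v))"
    by (simp add: dot_lmul_matrix[symmetric] transpose_matrix_vector)
  finally show "0 \<le> v \<bullet> ((p *\<^sub>R (A ** D ** transpose A)) *v v)"
    using assms unfolding nonneg_def_def by simp
qed

lemma mixture_exists:
  fixes \<xi> \<eta>2 :: "'a pmf"
  assumes p: "p = measure_pmf.prob \<xi> S" "p > 0"
  shows "\<exists>\<xi>2. \<forall>x. pmf \<xi>2 x = p * pmf \<eta>2 x + (if x \<in> S then 0 else pmf \<xi> x)"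
proof (cases "set_pmf \<xi> \<inter> - S = {}")
  case True
  then have p1: "p = 1"
    using p measure_pmf.prob_compl[of S \<xi>] measure_pmf_zero_iff[of \<xi> "-S"]
    by (simp add: Compl_eq_Diff_UNIV)
  have "pmf \<xi> x = 0" if "x \<notin> S" for x
    using True that by (auto simp: pmf_eq_0_set_pmf)
  then show ?thesis using p1 by (intro exI[of _ \<eta>2]) auto
next
  case False
  define \<rho> where "\<rho> = cond_pmf \<xi> (- S)"
  have m: "measure_pmf.prob \<xi> (-S) = 1 - p"
    using p measure_pmf.prob_compl[of S \<xi>] by (simp add: Compl_eq_Diff_UNIV)
  have "measure_pmf.prob \<xi> (-S) \<noteq> 0"
    using False measure_pmf_zero_iff[of \<xi> "-S"] by blast
  moreover have "measure_pmf.prob \<xi> S \<le> 1" by (rule measure_pmf.prob_le_1)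
  ultimately have p1: "p < 1" using m p by linarith
  have pr: "pmf \<rho> x = (if x \<in> -S then pmf \<xi> x / (1 - p) else 0)" for x
    unfolding \<rho>_def using pmf_cond[OF False, of x] m by simp
  define \<xi>2 where "\<xi>2 = bind_pmf (bernoulli_pmf p) (\<lambda>b. if b then \<eta>2 else \<rho>)"
  have "pmf \<xi>2 x = p * pmf \<eta>2 x + (if x \<in> S then 0 else pmf \<xi> x)" for x
    unfolding \<xi>2_def pmf_bind using p p1 by (simp add: pr)
  then show ?thesis by blast
qed

theorem theorem3:
  fixes X :: "(real^2) set"
    and f :: "real^2 \<Rightarrow> real^'p"
    and tf :: "real^2 \<Rightarrow> real"
    and t :: real
    and ft :: "real^2 \<Rightarrow> real^'q"
    and \<xi> :: "(real^2) pmf"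
  assumes "lin_indep_on X f"
    and "t \<in> tf ` X"
    and "lin_indep_on {x\<in>X. tf x = t} ft"
    and "same_span_on {x\<in>X. tf x = t} f ft"
    and "admissible X f \<xi>"
    and "measure_pmf.prob \<xi> {x\<in>X. tf x = t} > 0"
  shows "admissible {x\<in>X. tf x = t} ft (cond_pmf \<xi> {x\<in>X. tf x = t})"
proof -
  define S where "S = {x\<in>X. tf x = t}"
  define p where "p = measure_pmf.prob \<xi> S"
  define \<eta> where "\<eta> = cond_pmf \<xi> S"
  have pp: "p > 0" using assms(6) unfolding p_def S_def .
  have ne: "set_pmf \<xi> \<inter> S \<noteq> {}"
    using pp measure_pmf_zero_iff[of \<xi> S] unfolding p_def by auto
  have pmf\<eta>: "pmf \<eta> x = (if x \<in> S then pmf \<xi> x / p else 0)" for x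
    unfolding \<eta>_def p_def using pmf_cond[OF ne] by simp
  have set\<eta>: "set_pmf \<eta> = set_pmf \<xi> \<inter> S"
    unfolding \<eta>_def using set_cond_pmf[OF ne] .
  have d\<xi>: "design X \<xi>" using assms(5) unfolding admissible_def by blast
  have d\<eta>: "design S \<eta>" using d\<xi> unfolding design_def set\<eta> by auto
  have noimp: "\<not> (\<exists>\<xi>2. design X \<xi>2 \<and> info_matrix f \<xi>2 \<noteq> info_matrix f \<xi> \<and>
              nonneg_def (info_matrix f \<xi>2 - info_matrix f \<xi>))"
    using assms(5) unfolding admissible_def by blast
  obtain d where d: "\<And>i x. x \<in> S \<Longrightarrow> f x $ i = d i \<bullet> ft x"
    using assms(4) unfolding same_span_on_def S_def by metis
  obtain c where c: "\<And>i x. x \<in> S \<Longrightarrow> ft x $ i = c i \<bullet> f x"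
    using assms(4) unfolding same_span_on_def S_def by metis
  define A :: "real^'q^'p" where "A = (\<chi> i. d i)"
  define C :: "real^'p^'q" where "C = (\<chi> i. c i)"
  have fA: "f x = A *v ft x" if "x \<in> S" for x
    using d[OF that] by (simp add: vec_eq_iff A_def matrix_vector_mul_component)
  have fC: "ft x = C *v f x" if "x \<in> S" for x
    using c[OF that] by (simp add: vec_eq_iff C_def matrix_vector_mul_component)
  have CA: "C ** A = mat 1"
  proof -
    have "(C ** A) $ i = mat 1 $ i" for i
    proof -
      have "((C ** A) $ i - axis i 1) \<bullet> ft x = 0" if "x \<in> S" for x
      proof -
        have "(C ** A) *v ft x = C *v (A *v ft x)" by (simp add: matrix_vector_mul_assoc)
        also have "\<dots> = ft x" using fA[OF that] fC[OF that] by simp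
        finally have "(C ** A) *v ft x = ft x" .
        then have "(C ** A) $ i \<bullet> ft x = ft x $ i"
          by (metis matrix_vector_mul_component)
        then show ?thesis by (simp add: inner_diff_left inner_axis')
      qed
      then have "(C ** A) $ i - axis i 1 = 0"
        using assms(3) unfolding lin_indep_on_def S_def by blast
      then show ?thesis by (simp add: vec_eq_iff mat_def axis_def)
    qed
    then show ?thesis by (simp add: vec_eq_iff)
  qed
  show ?thesis
    unfolding admissible_def S_def[symmetric] \<eta>_def[symmetric]
  proof (intro conjI d\<eta> notI)
    assume "\<exists>\<eta>2. design S \<eta>2 \<and> info_matrix ft \<eta>2 \<noteq> info_matrix ft \<eta> \<and>
              nonneg_def (info_matrix ft \<eta>2 - info_matrix ft \<eta>)"
    then obtain \<eta>2 where d2: "design S \<eta>2" and ne2: "info_matrix ft \<eta>2 \<noteq> info_matrix ft \<eta>"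
      and nn: "nonneg_def (info_matrix ft \<eta>2 - info_matrix ft \<eta>)" by blast
    obtain \<xi>2 where pmf2: "\<And>x. pmf \<xi>2 x = p * pmf \<eta>2 x + (if x \<in> S then 0 else pmf \<xi> x)"
      using mixture_exists[OF p_def pp] by blast
    define F where "F = set_pmf \<xi> \<union> set_pmf \<eta>2"
    define G where "G = F \<inter> S"
    have fF: "finite F" using d\<xi> d2 unfolding F_def design_def by auto
    have fG: "finite G" using fF unfolding G_def by auto
    have \<eta>2S: "pmf \<eta>2 x = 0" if "x \<notin> S" for x
      using d2 that unfolding design_def by (auto simp: pmf_eq_0_set_pmf)
    have s2: "set_pmf \<xi>2 \<subseteq> F"
      unfolding F_def using \<eta>2S by (auto simp: set_pmf_eq pmf2 split: if_splits)
    have d\<xi>2: "design X \<xi>2"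
      using s2 fF d\<xi> d2 unfolding design_def F_def S_def by (auto intro: finite_subset)
    define D where "D = info_matrix ft \<eta>2 - info_matrix ft \<eta>"
    have Deq: "D = (\<Sum>x\<in>G. (pmf \<eta>2 x - pmf \<eta> x) *\<^sub>R outer (ft x))"
    proof -
      have "D = (\<Sum>x\<in>G. pmf \<eta>2 x *\<^sub>R outer (ft x)) - (\<Sum>x\<in>G. pmf \<eta> x *\<^sub>R outer (ft x))"
        unfolding D_def
        by (subst info_sum[OF fG], use d2 in \<open>force simp: G_def F_def design_def\<close>,
            subst info_sum[OF fG], auto simp: G_def F_def set\<eta>)
      then show ?thesis by (simp add: sum_subtractf scaleR_diff_left)
    qed
    have Meq: "info_matrix f \<xi>2 - info_matrix f \<xi> = p *\<^sub>R (A ** D ** transpose A)"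
    proof -
      have "info_matrix f \<xi>2 - info_matrix f \<xi> = (\<Sum>x\<in>F. (pmf \<xi>2 x - pmf \<xi> x) *\<^sub>R outer (f x))"
        by (subst info_sum[OF fF s2], subst info_sum[OF fF], auto simp: F_def sum_subtractf scaleR_diff_left)
      also have "\<dots> = (\<Sum>x\<in>G. (pmf \<xi>2 x - pmf \<xi> x) *\<^sub>R outer (f x))"
        unfolding G_def
        by (rule sum.mono_neutral_right) (use fF \<eta>2S in \<open>auto simp: pmf2\<close>)
      also have "\<dots> = (\<Sum>x\<in>G. (p * (pmf \<eta>2 x - pmf \<eta> x)) *\<^sub>R (A ** outer (ft x) ** transpose A))"
        by (rule sum.cong) (use pp in \<open>auto simp: G_def pmf2 pmf\<eta> fA outer_mult right_diff_distrib\<close>)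
      also have "\<dots> = p *\<^sub>R (A ** D ** transpose A)"
        unfolding Deq
        by (simp add: sum_matrix_mult[OF fG, symmetric] scaleR_sum_right)
      finally show ?thesis .
    qed
    have "nonneg_def (info_matrix f \<xi>2 - info_matrix f \<xi>)"
      unfolding Meq using nonneg_congr[of D p A] nn pp unfolding D_def by simp
    moreover have "info_matrix f \<xi>2 \<noteq> info_matrix f \<xi>"
    proof
      assume "info_matrix f \<xi>2 = info_matrix f \<xi>"
      then have "p *\<^sub>R (A ** D ** transpose A) = 0" using Meq by simp
      then have z: "A ** D ** transpose A = 0" using pp by simp
      have "D = (C ** A) ** D ** transpose (C ** A)" by (simp add: CA)
      also have "\<dots> = C ** (A ** D ** transpose A) ** transpose C"
        by (simp add: matrix_transpose_mul matrix_mul_assoc)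
      finally have "D = 0" using z by simp
      then show False using ne2 unfolding D_def by simp
    qed
    ultimately show False using noimp d\<xi>2 by blast
  qed
qed

end
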